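(* Let $G$ be a group with identity $e$ and let $\mathcal I\subseteq G$ be a set of involutions ($i^2=e$ for $i\in\mathcal I$) such that $G=\langle \mathcal I\rangle$ and for every $a,b\in\mathcal I$ there exists $t\in G$ with $t^2=ab$. Let $H$ be an arbitrary abelian group. If $f:G\to H$ satisfies $f(xy)+f(xy^{-1})=2f(x)$ for all $x,y\in G$ and $f(e)=0$, then $f$ is a group homomorphism and also satisfies $f(xy)+f(x^{-1}y)=2f(y)$ for all $x,y\in G$. Consequently, $S_1(G,H)=S_{1,2}(G,H)=\mathrm{Hom}(G,H)\cong \mathrm{Hom}(G/[G,G],H)$.
   Context: $H$ is written additively. $S_1(G,H)$ denotes the set of functions $f:G\to H$ with $f(e)=0$ satisfying (J1): $f(xy)+f(xy^{-1})=2f(x)$ for all $x,y\in G$; $S_2(G,H)$ is the set of such normalized functions satisfying (J2): $f(xy)+f(x^{-1}y)=2f(y)$ for all $x,y\in G$; and $S_{1,2}(G,H)=S_1(G,H)\cap S_2(G,H)$. $[G,G]$ is the commutator subgroup, so $G/[G,G]$ is the abelianization. *)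

theory Defs
  imports "HOL-Algebra.Algebra"
begin

definition S1 :: "('g, 'm) monoid_scheme \<Rightarrow> ('g \<Rightarrow> 'h::ab_group_add) set" where
  "S1 G = {f \<in> extensional (carrier G). f \<one>\<^bsub>G\<^esub> = 0 \<and>
     (\<forall>x\<in>carrier G. \<forall>y\<in>carrier G.
        f (x \<otimes>\<^bsub>G\<^esub> y) + f (x \<otimes>\<^bsub>G\<^esub> inv\<^bsub>G\<^esub> y) = f x + f x)}"

definition S2 :: "('g, 'm) monoid_scheme \<Rightarrow> ('g \<Rightarrow> 'h::ab_group_add) set" where
  "S2 G = {f \<in> extensional (carrier G). f \<one>\<^bsub>G\<^esub> = 0 \<and>
     (\<forall>x\<in>carrier G. \<forall>y\<in>carrier G.
        f (x \<otimes>\<^bsub>G\<^esub> y) + f (inv\<^bsub>G\<^esub> x \<otimes>\<^bsub>G\<^esub> y) = f y + f y)}"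

definition S12 :: "('g, 'm) monoid_scheme \<Rightarrow> ('g \<Rightarrow> 'h::ab_group_add) set" where
  "S12 G = S1 G \<inter> S2 G"

definition Hom :: "('g, 'm) monoid_scheme \<Rightarrow> ('g \<Rightarrow> 'h::ab_group_add) set" where
  "Hom G = {f \<in> extensional (carrier G).
     \<forall>x\<in>carrier G. \<forall>y\<in>carrier G. f (x \<otimes>\<^bsub>G\<^esub> y) = f x + f y}"

end

theory Submission
  imports Defs
begin

context group
begin

lemma part1:
  fixes f :: "'a \<Rightarrow> 'h::ab_group_add"
  assumes IC: "I \<subseteq> carrier G"
    and Iinv: "\<forall>i\<in>I. i \<otimes> i = \<one>"
    and gen: "generate G I = carrier G"
    and sqc: "\<forall>a\<in>I. \<forall>b\<in>I. \<exists>t\<in>carrier G. t \<otimes> t = a \<otimes> b"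
    and f1: "f \<one> = 0"
    and J: "\<forall>x\<in>carrier G. \<forall>y\<in>carrier G. f (x \<otimes> y) + f (x \<otimes> inv y) = f x + f x"
  shows "\<forall>x\<in>carrier G. \<forall>y\<in>carrier G. f (x \<otimes> y) = f x + f y"
proof -
  have neg: "f (inv y) = - f y" if "y \<in> carrier G" for y
    using J[rule_format, OF one_closed that] that f1 by (simp add: eq_neg_iff_add_eq_0 add.commute)
  have sq: "f (x \<otimes> x) = f x + f x" if "x \<in> carrier G" for x
    using J[rule_format, OF that that] that f1 by simp
  have S: "f (x \<otimes> y \<otimes> x) = f x + f x + f y" if "x \<in> carrier G" "y \<in> carrier G" for x y
  proof -
    have "x \<otimes> inv (y \<otimes> x) = inv y" using that by (simp add: inv_mult_group m_assoc[symmetric])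
    then show ?thesis using J[rule_format, of x "y \<otimes> x"] that neg[of y]
      by (simp add: m_assoc algebra_simps)
  qed
  have invI: "inv a = a" if "a \<in> I" for a
    using Iinv that IC by (metis inv_equality subsetD)
  have fa2: "f a + f a = 0" if "a \<in> I" for a
    using neg[of a] invI[OF that] that IC by (metis subsetD neg_eq_iff_add_eq_0)
  have conjI: "f (a \<otimes> y \<otimes> a) = f y" if "a \<in> I" "y \<in> carrier G" for a y
    using S[of a y] fa2[OF that(1)] that IC by auto
  have conj: "\<forall>y\<in>carrier G. f (g \<otimes> y \<otimes> inv g) = f y" if "g \<in> generate G I" for g
    using that
  proof (induction rule: generate.induct)
    case one
    then show ?case by simp
  next
    case (incl h)
    then show ?case using conjI invI by simp
  next
    case (inv h)
    then show ?case using conjI invI IC by auto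
  next
    case (eng h1 h2)
    have c: "h1 \<in> carrier G" "h2 \<in> carrier G" using eng.hyps gen by auto
    show ?case
    proof
      fix y assume y: "y \<in> carrier G"
      have "h1 \<otimes> h2 \<otimes> y \<otimes> inv (h1 \<otimes> h2) = h1 \<otimes> (h2 \<otimes> y \<otimes> inv h2) \<otimes> inv h1"
        using c y by (simp add: inv_mult_group m_assoc)
      then show "f (h1 \<otimes> h2 \<otimes> y \<otimes> inv (h1 \<otimes> h2)) = f y"
        using eng.IH c y by simp
    qed
  qed
  have comm: "f (x \<otimes> y) = f (y \<otimes> x)" if "x \<in> carrier G" "y \<in> carrier G" for x y
  proof -
    have "x \<otimes> (y \<otimes> x) \<otimes> inv x = x \<otimes> y" using that by (simp add: m_assoc)
    moreover have "f (x \<otimes> (y \<otimes> x) \<otimes> inv x) = f (y \<otimes> x)"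
      using conj[of x] that gen by auto
    ultimately show ?thesis by simp
  qed
  have dbl: "f (x \<otimes> y) + f (x \<otimes> y) = f x + f x + f y + f y"
    if "x \<in> carrier G" "y \<in> carrier G" for x y
  proof -
    have e: "x \<otimes> (y \<otimes> inv x) \<otimes> x = x \<otimes> y" using that by (simp add: m_assoc)
    have 1: "f (x \<otimes> y) = f x + f x + f (y \<otimes> inv x)" using S[of x "y \<otimes> inv x"] e that by simp
    have 2: "f (y \<otimes> x) + f (y \<otimes> inv x) = f y + f y" using J that by simp
    show ?thesis using 1 2 comm[OF that] by (simp add: algebra_simps)
  qed
  define D where "D x y = f (x \<otimes> y) - f x - f y" for x y
  have cocy: "D x y + D (x \<otimes> y) z = D y z + D x (y \<otimes> z)"
    if "x \<in> carrier G" "y \<in> carrier G" "z \<in> carrier G" for x y z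
    using that by (simp add: D_def m_assoc algebra_simps)
  have D1: "D x \<one> = 0" if "x \<in> carrier G" for x using that f1 by (simp add: D_def)
  have Dinv: "D x (inv y) = - D x y" if "x \<in> carrier G" "y \<in> carrier G" for x y
  proof -
    have "f (x \<otimes> inv y) = f x + f x - f (x \<otimes> y)" using J that by (simp add: eq_diff_eq add.commute)
    then show ?thesis using neg[OF that(2)] by (simp add: D_def algebra_simps)
  qed
  have Dyy: "D (x \<otimes> y) y = D x y" if "x \<in> carrier G" "y \<in> carrier G" for x y
  proof -
    have "D y (inv y) = 0" using that f1 neg[OF that(2)] by (simp add: D_def)
    then have "D x y + D (x \<otimes> y) (inv y) = 0"
      using cocy[of x y "inv y"] that D1[OF that(1)] by simp
    then show ?thesis using Dinv[of "x \<otimes> y" y] that by (simp add: add_eq_0_iff)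
  qed
  have D2: "D x y + D x y = 0" if "x \<in> carrier G" "y \<in> carrier G" for x y
    using dbl[OF that] by (simp add: D_def algebra_simps)
  have Dsq: "D x (y \<otimes> y) = 0" if "x \<in> carrier G" "y \<in> carrier G" for x y
  proof -
    have "D y y = 0" using sq[OF that(2)] by (simp add: D_def)
    then show ?thesis using cocy[OF that(1) that(2) that(2)] Dyy[OF that] D2[OF that] by simp
  qed
  have pair: "f (a \<otimes> b) = f a + f b" if "a \<in> I" "b \<in> I" for a b
  proof -
    have "\<exists>t\<in>carrier G. t \<otimes> t = a \<otimes> b" using sqc that by simp
    then obtain t where t: "t \<in> carrier G" "t \<otimes> t = a \<otimes> b" by (elim bexE) simp
    have ac: "a \<in> carrier G" "b \<in> carrier G" using that IC by auto
    have aa: "a \<otimes> a = \<one>" using Iinv that by auto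
    have "a \<otimes> t \<otimes> t = a \<otimes> (a \<otimes> b)" using t ac by (simp add: m_assoc)
    also have "\<dots> = a \<otimes> a \<otimes> b" using ac by (simp only: m_assoc)
    also have "\<dots> = b" using aa ac by simp
    finally have e1: "a \<otimes> t \<otimes> t = b" .
    have e2: "a \<otimes> t \<otimes> inv t = a" using t ac by (simp add: m_assoc)
    have 1: "f b + f a = f (a \<otimes> t) + f (a \<otimes> t)"
      using J[rule_format, of "a \<otimes> t" t] e1 e2 t ac by simp
    have 2: "f (a \<otimes> b) = f t + f t" using sq[OF t(1)] t by simp
    have e3: "t \<otimes> (a \<otimes> inv t) \<otimes> t = t \<otimes> a" using t ac by (simp add: m_assoc)
    have 3: "f (t \<otimes> a) = f t + f t + f (a \<otimes> inv t)" using S[of t "a \<otimes> inv t"] e3 t ac by simp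
    have 4: "f (a \<otimes> t) + f (a \<otimes> inv t) = 0" using J[rule_format, of a t] t ac fa2[OF that(1)] by simp
    have 5: "f (a \<otimes> t) = f (t \<otimes> a)" using comm[OF ac(1) t(1)] .
    have 6: "f (a \<otimes> inv t) = - f (a \<otimes> t)" using 4 by (simp add: eq_neg_iff_add_eq_0 add.commute)
    have "f (a \<otimes> t) = f t + f t - f (a \<otimes> t)" using 3 5 6 by simp
    then have "f (a \<otimes> t) + f (a \<otimes> t) = f t + f t" by (simp add: eq_diff_eq)
    then show ?thesis using 1 2 by (simp add: add.commute)
  qed
  have DI: "D (x \<otimes> a) b = - D x a" if "x \<in> carrier G" "a \<in> I" "b \<in> I" for x a b
  proof -
    have "\<exists>t\<in>carrier G. t \<otimes> t = a \<otimes> b" using sqc that by simp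
    then obtain t where t: "t \<in> carrier G" "t \<otimes> t = a \<otimes> b" by (elim bexE) simp
    have ac: "a \<in> carrier G" "b \<in> carrier G" using that IC by auto
    have "D x (a \<otimes> b) = 0" using Dsq[OF that(1) t(1)] t by simp
    moreover have "D a b = 0" using pair[OF that(2,3)] by (simp add: D_def)
    ultimately show ?thesis using cocy[OF that(1) ac] by (simp add: add_eq_0_iff)
  qed
  have Zg: "\<forall>y\<in>carrier G. (\<forall>b\<in>I. D y b = 0) \<longrightarrow> (\<forall>b\<in>I. D (y \<otimes> g) b = 0)"
    if "g \<in> generate G I" for g
    using that
  proof (induction rule: generate.induct)
    case one
    then show ?case by simp
  next
    case (incl h)
    then show ?case using DI by simp
  next
    case (inv h)
    then show ?case using DI invI by simp
  next
    case (eng h1 h2)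
    have c: "h1 \<in> carrier G" "h2 \<in> carrier G" using eng.hyps gen by auto
    show ?case
    proof (intro ballI impI)
      fix y b assume y: "y \<in> carrier G" and h: "\<forall>b\<in>I. D y b = 0" and b: "b \<in> I"
      have "\<forall>b\<in>I. D (y \<otimes> h1) b = 0" using eng.IH(1) y h by blast
      then have "\<forall>b\<in>I. D (y \<otimes> h1 \<otimes> h2) b = 0" using eng.IH(2) y c by blast
      then show "D (y \<otimes> (h1 \<otimes> h2)) b = 0" using b y c by (simp add: m_assoc)
    qed
  qed
  have DgI: "D g b = 0" if "g \<in> carrier G" "b \<in> I" for g b
  proof -
    have "\<forall>b\<in>I. D \<one> b = 0" using IC by (auto simp add: D_def f1)
    then show ?thesis using Zg[of g] that gen by auto
  qed
  have B: "\<forall>x\<in>carrier G. D x g = 0" if "g \<in> generate G I" for g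
    using that
  proof (induction rule: generate.induct)
    case one
    then show ?case using D1 by simp
  next
    case (incl h)
    then show ?case using DgI by simp
  next
    case (inv h)
    then show ?case using DgI invI by simp
  next
    case (eng h1 h2)
    have c: "h1 \<in> carrier G" "h2 \<in> carrier G" using eng.hyps gen by auto
    show ?case
    proof
      fix x assume x: "x \<in> carrier G"
      have "D x h1 = 0" "D (x \<otimes> h1) h2 = 0" "D h1 h2 = 0" using eng.IH x c by auto
      then show "D x (h1 \<otimes> h2) = 0" using cocy[OF x c] by simp
    qed
  qed
  show ?thesis
  proof (intro ballI)
    fix x y assume "x \<in> carrier G" "y \<in> carrier G"
    then have "D x y = 0" using B[of y] gen by auto
    then show "f (x \<otimes> y) = f x + f y" by (simp add: D_def algebra_simps)
  qed
qed

end


lemma (in group) hom_props: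
  fixes f :: "'a \<Rightarrow> 'h::ab_group_add"
  assumes H: "\<forall>x\<in>carrier G. \<forall>y\<in>carrier G. f (x \<otimes> y) = f x + f y"
  shows "f \<one> = 0" "\<And>x. x \<in> carrier G \<Longrightarrow> f (inv x) = - f x"
    "\<forall>x\<in>carrier G. \<forall>y\<in>carrier G. f (x \<otimes> y) + f (x \<otimes> inv y) = f x + f x"
    "\<forall>x\<in>carrier G. \<forall>y\<in>carrier G. f (x \<otimes> y) + f (inv x \<otimes> y) = f y + f y"
proof -
  show f1: "f \<one> = 0" using H[rule_format, of \<one> \<one>] by simp
  show ni: "f (inv x) = - f x" if "x \<in> carrier G" for x
    using H[rule_format, of x "inv x"] that f1 by (simp add: eq_neg_iff_add_eq_0 add.commute)
  show "\<forall>x\<in>carrier G. \<forall>y\<in>carrier G. f (x \<otimes> y) + f (x \<otimes> inv y) = f x + f x"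
  proof (intro ballI)
    fix x y assume xy: "x \<in> carrier G" "y \<in> carrier G"
    have "f (x \<otimes> y) = f x + f y" "f (x \<otimes> inv y) = f x + f (inv y)" using H xy by auto
    then show "f (x \<otimes> y) + f (x \<otimes> inv y) = f x + f x" using ni[OF xy(2)] by (simp add: algebra_simps)
  qed
  show "\<forall>x\<in>carrier G. \<forall>y\<in>carrier G. f (x \<otimes> y) + f (inv x \<otimes> y) = f y + f y"
  proof (intro ballI)
    fix x y assume xy: "x \<in> carrier G" "y \<in> carrier G"
    have "f (x \<otimes> y) = f x + f y" "f (inv x \<otimes> y) = f (inv x) + f y" using H xy by auto
    then show "f (x \<otimes> y) + f (inv x \<otimes> y) = f y + f y" using ni[OF xy(1)] by (simp add: algebra_simps)
  qed
qed

theorem mainTheorem5: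
  fixes G :: "('g, 'm) monoid_scheme" and I :: "'g set"
  assumes "group G"
    and "I \<subseteq> carrier G"
    and "\<forall>i\<in>I. i \<otimes>\<^bsub>G\<^esub> i = \<one>\<^bsub>G\<^esub>"
    and "generate G I = carrier G"
    and "\<forall>a\<in>I. \<forall>b\<in>I. \<exists>t\<in>carrier G. t \<otimes>\<^bsub>G\<^esub> t = a \<otimes>\<^bsub>G\<^esub> b"
  shows "(\<forall>f :: 'g \<Rightarrow> 'h::ab_group_add.
            (f \<one>\<^bsub>G\<^esub> = 0 \<and>
             (\<forall>x\<in>carrier G. \<forall>y\<in>carrier G.
                f (x \<otimes>\<^bsub>G\<^esub> y) + f (x \<otimes>\<^bsub>G\<^esub> inv\<^bsub>G\<^esub> y) = f x + f x))
            \<longrightarrow> (\<forall>x\<in>carrier G. \<forall>y\<in>carrier G. f (x \<otimes>\<^bsub>G\<^esub> y) = f x + f y)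
              \<and> (\<forall>x\<in>carrier G. \<forall>y\<in>carrier G.
                    f (x \<otimes>\<^bsub>G\<^esub> y) + f (inv\<^bsub>G\<^esub> x \<otimes>\<^bsub>G\<^esub> y) = f y + f y))
       \<and> (S1 G :: ('g \<Rightarrow> 'h) set) = S12 G
       \<and> (S12 G :: ('g \<Rightarrow> 'h) set) = Hom G
       \<and> bij_betw (\<lambda>\<phi>. \<lambda>x\<in>carrier G. \<phi> (derived G (carrier G) #>\<^bsub>G\<^esub> x))
                  (Hom (G Mod derived G (carrier G)) :: ('g set \<Rightarrow> 'h) set)
                  (Hom G :: ('g \<Rightarrow> 'h) set)
       \<and> (\<forall>\<phi>\<in>(Hom (G Mod derived G (carrier G)) :: ('g set \<Rightarrow> 'h) set).
            \<forall>\<psi>\<in>Hom (G Mod derived G (carrier G)).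
             (\<lambda>x\<in>carrier G.
                (\<lambda>A\<in>carrier (G Mod derived G (carrier G)). \<phi> A + \<psi> A)
                  (derived G (carrier G) #>\<^bsub>G\<^esub> x))
             = (\<lambda>x\<in>carrier G. \<phi> (derived G (carrier G) #>\<^bsub>G\<^esub> x)
                                + \<psi> (derived G (carrier G) #>\<^bsub>G\<^esub> x)))"
proof -
  interpret group G by (rule assms(1))
  have P1: "(\<forall>x\<in>carrier G. \<forall>y\<in>carrier G. f (x \<otimes>\<^bsub>G\<^esub> y) = f x + f y)
              \<and> (\<forall>x\<in>carrier G. \<forall>y\<in>carrier G. f (x \<otimes>\<^bsub>G\<^esub> y) + f (inv\<^bsub>G\<^esub> x \<otimes>\<^bsub>G\<^esub> y) = f y + f y)"
    if "f \<one>\<^bsub>G\<^esub> = 0" "\<forall>x\<in>carrier G. \<forall>y\<in>carrier G. f (x \<otimes>\<^bsub>G\<^esub> y) + f (x \<otimes>\<^bsub>G\<^esub> inv\<^bsub>G\<^esub> y) = f x + f x"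
    for f :: "'g \<Rightarrow> 'h"
  proof -
    have h: "\<forall>x\<in>carrier G. \<forall>y\<in>carrier G. f (x \<otimes>\<^bsub>G\<^esub> y) = f x + f y"
      using part1[OF assms(2,3,4,5) that] .
    show ?thesis using h hom_props(4)[OF h] by blast
  qed
  have A: "S1 G = (S12 G :: ('g \<Rightarrow> 'h) set)"
    unfolding S12_def S1_def S2_def using P1 by blast
  have B: "(S12 G :: ('g \<Rightarrow> 'h) set) = Hom G"
  proof
    show "(S12 G :: ('g \<Rightarrow> 'h) set) \<subseteq> Hom G"
      unfolding S12_def S1_def S2_def Hom_def using P1 by blast
    show "(Hom G :: ('g \<Rightarrow> 'h) set) \<subseteq> S12 G"
    proof
      fix f :: "'g \<Rightarrow> 'h" assume "f \<in> Hom G"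
      then have hh: "\<forall>x\<in>carrier G. \<forall>y\<in>carrier G. f (x \<otimes>\<^bsub>G\<^esub> y) = f x + f y"
        and he: "f \<in> extensional (carrier G)" unfolding Hom_def by auto
      note hp = hom_props[OF hh]
      show "f \<in> S12 G" unfolding S12_def S1_def S2_def using he hp(1) hp(3) hp(4) by blast
    qed
  qed
  define N where "N = derived G (carrier G)"
  have nN: "N \<lhd> G" unfolding N_def by (rule derived_is_normal[OF normal_self])
  interpret normal N G by (rule nN)
  have NC: "N \<subseteq> carrier G" by (rule subset)
  have cF: "carrier (G Mod N) = (\<lambda>x. N #>\<^bsub>G\<^esub> x) ` carrier G" by (rule carrier_FactGroup)
  have mF: "\<And>x y. x \<in> carrier G \<Longrightarrow> y \<in> carrier G \<Longrightarrow> (N #>\<^bsub>G\<^esub> x) \<otimes>\<^bsub>G Mod N\<^esub> (N #>\<^bsub>G\<^esub> y) = N #>\<^bsub>G\<^esub> (x \<otimes>\<^bsub>G\<^esub> y)"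
    using rcos_sum by simp
  have cosin: "\<And>x. x \<in> carrier G \<Longrightarrow> N #>\<^bsub>G\<^esub> x \<in> carrier (G Mod N)" using cF by blast
  have C: "bij_betw (\<lambda>\<phi>. \<lambda>x\<in>carrier G. \<phi> (N #>\<^bsub>G\<^esub> x)) (Hom (G Mod N) :: ('g set \<Rightarrow> 'h) set) (Hom G)"
    unfolding bij_betw_def
  proof (intro conjI)
    show "inj_on (\<lambda>\<phi>. \<lambda>x\<in>carrier G. \<phi> (N #>\<^bsub>G\<^esub> x)) (Hom (G Mod N) :: ('g set \<Rightarrow> 'h) set)"
    proof (rule inj_onI)
      fix \<phi> \<psi> :: "'g set \<Rightarrow> 'h"
      assume p: "\<phi> \<in> Hom (G Mod N)" "\<psi> \<in> Hom (G Mod N)"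
        and e: "(\<lambda>x\<in>carrier G. \<phi> (N #>\<^bsub>G\<^esub> x)) = (\<lambda>x\<in>carrier G. \<psi> (N #>\<^bsub>G\<^esub> x))"
      have eqA: "\<phi> A = \<psi> A" if hA: "A \<in> carrier (G Mod N)" for A
      proof -
        obtain x where x: "x \<in> carrier G" "A = N #>\<^bsub>G\<^esub> x" using hA cF by blast
        have "(\<lambda>x\<in>carrier G. \<phi> (N #>\<^bsub>G\<^esub> x)) x = (\<lambda>x\<in>carrier G. \<psi> (N #>\<^bsub>G\<^esub> x)) x" using e by simp
        then show ?thesis using x by simp
      qed
      have ex1: "\<phi> \<in> extensional (carrier (G Mod N))" using p(1) by (simp add: Hom_def)
      have ex2: "\<psi> \<in> extensional (carrier (G Mod N))" using p(2) by (simp add: Hom_def)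
      show "\<phi> = \<psi>" by (rule extensionalityI[OF ex1 ex2 eqA])
    qed
    show "(\<lambda>\<phi>. \<lambda>x\<in>carrier G. \<phi> (N #>\<^bsub>G\<^esub> x)) ` (Hom (G Mod N) :: ('g set \<Rightarrow> 'h) set) = Hom G"
    proof
      show "(\<lambda>\<phi>. \<lambda>x\<in>carrier G. \<phi> (N #>\<^bsub>G\<^esub> x)) ` (Hom (G Mod N) :: ('g set \<Rightarrow> 'h) set) \<subseteq> Hom G"
      proof
        fix g assume "g \<in> (\<lambda>\<phi>. \<lambda>x\<in>carrier G. \<phi> (N #>\<^bsub>G\<^esub> x)) ` (Hom (G Mod N) :: ('g set \<Rightarrow> 'h) set)"
        then obtain \<phi> :: "'g set \<Rightarrow> 'h" where p: "\<phi> \<in> Hom (G Mod N)" and g: "g = (\<lambda>x\<in>carrier G. \<phi> (N #>\<^bsub>G\<^esub> x))"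
          by blast
        have "g (x \<otimes>\<^bsub>G\<^esub> y) = g x + g y" if "x \<in> carrier G" "y \<in> carrier G" for x y
        proof -
          have "\<phi> ((N #>\<^bsub>G\<^esub> x) \<otimes>\<^bsub>G Mod N\<^esub> (N #>\<^bsub>G\<^esub> y)) = \<phi> (N #>\<^bsub>G\<^esub> x) + \<phi> (N #>\<^bsub>G\<^esub> y)"
            using p cosin that unfolding Hom_def by blast
          then show ?thesis using g that mF by simp
        qed
        then show "g \<in> Hom G" unfolding Hom_def using g by auto
      qed
      show "(Hom G :: ('g \<Rightarrow> 'h) set) \<subseteq> (\<lambda>\<phi>. \<lambda>x\<in>carrier G. \<phi> (N #>\<^bsub>G\<^esub> x)) ` Hom (G Mod N)"
      proof
        fix h :: "'g \<Rightarrow> 'h" assume hH: "h \<in> Hom G"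
        then have hh: "\<forall>x\<in>carrier G. \<forall>y\<in>carrier G. h (x \<otimes>\<^bsub>G\<^esub> y) = h x + h y"
          and hext: "h \<in> extensional (carrier G)" unfolding Hom_def by auto
        note hp = hom_props[OF hh]
        define K where "K = {x \<in> carrier G. h x = 0}"
        have sK: "subgroup K G"
        proof (rule subgroupI)
          show "K \<subseteq> carrier G" unfolding K_def by auto
          show "K \<noteq> {}" unfolding K_def using hp(1) by auto
          show "inv\<^bsub>G\<^esub> a \<in> K" if "a \<in> K" for a using that hp(2) unfolding K_def by auto
          show "a \<otimes>\<^bsub>G\<^esub> b \<in> K" if "a \<in> K" "b \<in> K" for a b using that hh unfolding K_def by auto
        qed
        have "derived_set G (carrier G) \<subseteq> K"
        proof
          fix z assume "z \<in> derived_set G (carrier G)"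
          then obtain a b where ab: "a \<in> carrier G" "b \<in> carrier G"
            and z: "z = a \<otimes>\<^bsub>G\<^esub> b \<otimes>\<^bsub>G\<^esub> inv\<^bsub>G\<^esub> a \<otimes>\<^bsub>G\<^esub> inv\<^bsub>G\<^esub> b" by blast
          have "h z = h a + h b + h (inv\<^bsub>G\<^esub> a) + h (inv\<^bsub>G\<^esub> b)" using z ab hh by simp
          also have "\<dots> = 0" using hp(2) ab by simp
          finally show "z \<in> K" using z ab unfolding K_def by simp
        qed
        then have NK: "N \<subseteq> K" unfolding N_def derived_def by (rule generate_subgroup_incl[OF _ sK])
        have hc: "h y = h x" if hx: "x \<in> carrier G" and hy: "y \<in> N #>\<^bsub>G\<^esub> x" for x y
        proof -
          obtain n where n: "n \<in> N" "y = n \<otimes>\<^bsub>G\<^esub> x" using hy unfolding r_coset_def by blast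
          have "n \<in> carrier G" "h n = 0" using n NK unfolding K_def by auto
          then show ?thesis using n hh that by simp
        qed
        define \<phi> where "\<phi> = (\<lambda>A\<in>carrier (G Mod N). h (SOME x. x \<in> carrier G \<and> A = N #>\<^bsub>G\<^esub> x))"
        have phix: "\<phi> (N #>\<^bsub>G\<^esub> x) = h x" if "x \<in> carrier G" for x
        proof -
          have ex: "\<exists>y. y \<in> carrier G \<and> N #>\<^bsub>G\<^esub> x = N #>\<^bsub>G\<^esub> y" using that by blast
          define y where "y = (SOME y. y \<in> carrier G \<and> N #>\<^bsub>G\<^esub> x = N #>\<^bsub>G\<^esub> y)"
          have y: "y \<in> carrier G" "N #>\<^bsub>G\<^esub> x = N #>\<^bsub>G\<^esub> y" using someI_ex[OF ex] unfolding y_def by auto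
          have "y \<in> N #>\<^bsub>G\<^esub> x" using y rcos_self[OF y(1) subgroup_axioms] by simp
          then have "h y = h x" using hc that by blast
          then show ?thesis using cosin[OF that] unfolding \<phi>_def y_def by simp
        qed
        have "\<phi> \<in> Hom (G Mod N)"
          unfolding Hom_def
        proof (intro CollectI conjI ballI)
          show "\<phi> \<in> extensional (carrier (G Mod N))" unfolding \<phi>_def by simp
          fix A B assume A: "A \<in> carrier (G Mod N)" and B: "B \<in> carrier (G Mod N)"
          obtain x where x: "x \<in> carrier G" "A = N #>\<^bsub>G\<^esub> x" using A cF by blast
          obtain y where y: "y \<in> carrier G" "B = N #>\<^bsub>G\<^esub> y" using B cF by blast
          show "\<phi> (A \<otimes>\<^bsub>G Mod N\<^esub> B) = \<phi> A + \<phi> B"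
            using x y mF phix hh by simp
        qed
        moreover have "h = (\<lambda>x\<in>carrier G. \<phi> (N #>\<^bsub>G\<^esub> x))"
        proof (rule extensionalityI[OF hext])
          show "(\<lambda>x\<in>carrier G. \<phi> (N #>\<^bsub>G\<^esub> x)) \<in> extensional (carrier G)" by simp
          show "h x = (\<lambda>x\<in>carrier G. \<phi> (N #>\<^bsub>G\<^esub> x)) x" if "x \<in> carrier G" for x
            using that phix by simp
        qed
        ultimately show "h \<in> (\<lambda>\<phi>. \<lambda>x\<in>carrier G. \<phi> (N #>\<^bsub>G\<^esub> x)) ` Hom (G Mod N)" by blast
      qed
    qed
  qed
  have D: "\<forall>\<phi>\<in>(Hom (G Mod N) :: ('g set \<Rightarrow> 'h) set). \<forall>\<psi>\<in>Hom (G Mod N).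
             (\<lambda>x\<in>carrier G. (\<lambda>A\<in>carrier (G Mod N). \<phi> A + \<psi> A) (N #>\<^bsub>G\<^esub> x))
             = (\<lambda>x\<in>carrier G. \<phi> (N #>\<^bsub>G\<^esub> x) + \<psi> (N #>\<^bsub>G\<^esub> x))"
    using cosin by (intro ballI) (rule restrict_ext, simp)
  show ?thesis using P1 A B C D unfolding N_def by blast
qed

end
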